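(* In the setting of error-feedback sparsification below, with $O_k\in(0,1)$, define $m_k^{t+1}=m_{B,k}^{t+1}m_{A,k}^{t+1}\in\mathbb{R}^{d\times\ell}$. Then for every $t\ge0$, $$\mathbb{E}\left[\left\|m_k^{t+1}\right\|_F\right] \leq \frac{2(1-O_k)}{O_k^2}\max_{0\leq i \leq t}\|\Delta\tilde{\theta}_k^i\|_F^2.$$
   Context: Setting: LoRA factors $\theta_B\in\mathbb{R}^{d\times r}$, $\theta_A\in\mathbb{R}^{r\times\ell}$. Let $q=r(d+\ell)$ and let $\mathcal{S}:\mathbb{R}^{q}\to\mathbb{R}^{q}$ be a (possibly random) sparsification operator keeping $u=O_kq$ nonzero entries ($0<u<q$) with $\mathbb{E}\|\mathcal{S}(x)-x\|_2^2\le(1-u/q)\|x\|_2^2$ for all $x$. Client $k$ has memories $m_{B,k}^t\in\mathbb{R}^{d\times r}$, $m_{A,k}^t\in\mathbb{R}^{r\times\ell}$ and concatenations $\tilde m_k^t=[m_{B,k}^{t\mathsf T}\ m_{A,k}^t]$, $\Delta\tilde\theta_k^t=[\Delta\theta_{B,k}^{t\mathsf T}\ \Delta\theta_{A,k}^t]$, $\tilde\theta_k^t=[\theta_{B,k}^{t\mathsf T}\ \theta_{A,k}^t]$ (identified with vectors in $\mathbb{R}^q$), where $\Delta\theta_{B,k}^t,\Delta\theta_{A,k}^t$ are the locally trained factors (trained with a near-orthogonality regularized loss), $\tilde\theta_k^t=\mathcal{S}(\tilde m_k^t+\Delta\tilde\theta_k^t)$, $\tilde m_k^{t+1}=\tilde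 m_k^t+\Delta\tilde\theta_k^t-\tilde\theta_k^t$, and $\tilde m_k^0=0$. Expectation is over the randomness of $\mathcal{S}$. *)

theory Defs
  imports "HOL-Probability.Probability"
begin

text \<open>Concatenated LoRA parameter space R^q, q = r(d+l): a vector indexed by
  'r \<times> ('d + 'l), i.e. the r \<times> (d+l) matrix [B^T  A].
  Entry (i, Inl j) is B(j,i) and entry (i, Inr j) is A(i,j).\<close>

definition concat_lora :: "real^'r::finite^'d::finite \<Rightarrow> real^'l::finite^'r \<Rightarrow> real^('r \<times> ('d + 'l))" where
  "concat_lora B A = (\<chi> p. case p of (i, Inl j) \<Rightarrow> B $ j $ i | (i, Inr j) \<Rightarrow> A $ i $ j)"

definition factor_B :: "real^('r::finite \<times> ('d::finite + 'l::finite)) \<Rightarrow> real^'r^'d" where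
  "factor_B v = (\<chi> j i. v $ (i, Inl j))"

definition factor_A :: "real^('r::finite \<times> ('d::finite + 'l::finite)) \<Rightarrow> real^'l^'r" where
  "factor_A v = (\<chi> i j. v $ (i, Inr j))"

definition keeps_entries :: "nat \<Rightarrow> real^'n::finite \<Rightarrow> real^'n \<Rightarrow> bool" where
  "keeps_entries u x y \<longleftrightarrow> (\<exists>I. card I = u \<and> (\<forall>i. y $ i = (if i \<in> I then x $ i else 0)))"

fun ef_memory :: "(real^'n::finite \<Rightarrow> (real^'n) pmf) \<Rightarrow> (nat \<Rightarrow> real^'n) \<Rightarrow> nat \<Rightarrow> (real^'n) pmf" where
  "ef_memory S D 0 = return_pmf 0"
| "ef_memory S D (Suc t) =
     bind_pmf (ef_memory S D t) (\<lambda>m. map_pmf (\<lambda>s. m + D t - s) (S (m + D t)))"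

end

theory Submission
  imports Defs
begin


lemma norm_sq_vec: "(norm (x::'a::real_inner^'n::finite))^2 = (\<Sum>i\<in>UNIV. (norm (x$i))^2)"
  by (simp add: power2_norm_eq_inner inner_vec_def)

lemma factor_norm:
  fixes v :: "real^('r::finite \<times> ('d::finite + 'l::finite))"
  shows "(norm (factor_B v))^2 + (norm (factor_A v))^2 = (norm v)^2"
proof -
  have "(norm v)^2 = (\<Sum>p\<in>UNIV. (v$p)^2)" by (simp add: norm_sq_vec)
  also have "\<dots> = (\<Sum>i\<in>UNIV. \<Sum>s\<in>UNIV. (v$(i,s))^2)"
    by (simp add: sum.cartesian_product)
  also have "\<dots> = (\<Sum>i\<in>UNIV. (\<Sum>j\<in>UNIV. (v$(i,Inl j))^2) + (\<Sum>j\<in>UNIV. (v$(i,Inr j))^2))"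
  proof (rule sum.cong[OF refl])
    fix i
    have "(\<Sum>s\<in>(UNIV::('d+'l) set). (v$(i,s))^2) = (\<Sum>s\<in>(UNIV <+> UNIV). (v$(i,s))^2)" by simp
    also have "\<dots> = (\<Sum>j\<in>UNIV. (v$(i,Inl j))^2) + (\<Sum>j\<in>UNIV. (v$(i,Inr j))^2)"
      by (subst sum.Plus) (auto simp: o_def)
    finally show "(\<Sum>s\<in>UNIV. (v$(i,s))^2) = (\<Sum>j\<in>UNIV. (v$(i,Inl j))^2) + (\<Sum>j\<in>UNIV. (v$(i,Inr j))^2)" .
  qed
  also have "\<dots> = (\<Sum>i\<in>UNIV. \<Sum>j\<in>UNIV. (v$(i,Inl j))^2) + (\<Sum>i\<in>UNIV. \<Sum>j\<in>UNIV. (v$(i,Inr j))^2)"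
    by (rule sum.distrib)
  also have "(\<Sum>i\<in>UNIV. \<Sum>j\<in>UNIV. (v$(i,Inl j))^2) = (\<Sum>j\<in>UNIV. \<Sum>i\<in>UNIV. (v$(i,Inl j))^2)"
    by (rule sum.swap)
  also have "(\<Sum>j\<in>UNIV. \<Sum>i\<in>UNIV. (v$(i,Inl j))^2) = (norm (factor_B v))^2"
    by (simp add: norm_sq_vec factor_B_def)
  also have "(\<Sum>i\<in>UNIV. \<Sum>j\<in>UNIV. (v$(i,Inr j))^2) = (norm (factor_A v))^2"
    by (simp add: norm_sq_vec factor_A_def)
  finally show ?thesis by simp
qed

lemma frob:
  fixes B :: "real^'r::finite^'d::finite" and A :: "real^'l::finite^'r"
  shows "norm (B ** A) \<le> norm B * norm A"
proof -
  have "(norm (B ** A))^2 = (\<Sum>j\<in>UNIV. \<Sum>k\<in>UNIV. (\<Sum>i\<in>UNIV. B$j$i * A$i$k)^2)"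
    by (simp add: norm_sq_vec matrix_matrix_mult_def)
  also have "\<dots> \<le> (\<Sum>j\<in>UNIV. \<Sum>k\<in>UNIV. (\<Sum>i\<in>UNIV. (B$j$i)^2) * (\<Sum>i\<in>UNIV. (A$i$k)^2))"
    by (intro sum_mono Cauchy_Schwarz_ineq_sum)
  also have "\<dots> = (\<Sum>j\<in>UNIV. \<Sum>i\<in>UNIV. (B$j$i)^2) * (\<Sum>k\<in>UNIV. \<Sum>i\<in>UNIV. (A$i$k)^2)"
    by (rule sum_product[symmetric])
  also have "(\<Sum>k\<in>UNIV. \<Sum>i\<in>UNIV. (A$i$k)^2) = (\<Sum>i\<in>UNIV. \<Sum>k\<in>UNIV. (A$i$k)^2)"
    by (rule sum.swap)
  also have "(\<Sum>i\<in>UNIV. \<Sum>k\<in>UNIV. (A$i$k)^2) = (norm A)^2"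
    by (simp add: norm_sq_vec)
  also have "(\<Sum>j\<in>UNIV. \<Sum>i\<in>UNIV. (B$j$i)^2) = (norm B)^2"
    by (simp add: norm_sq_vec)
  finally have "(norm (B ** A))^2 \<le> (norm B * norm A)^2" by (simp add: power_mult_distrib)
  then show ?thesis by (rule power2_le_imp_le) simp
qed

lemma frob2:
  fixes v :: "real^('r::finite \<times> ('d::finite + 'l::finite))"
  shows "norm (factor_B v ** factor_A v) \<le> (norm v)^2 / 2"
proof -
  have "norm (factor_B v ** factor_A v) \<le> norm (factor_B v) * norm (factor_A v)" by (rule frob)
  also have "\<dots> \<le> ((norm (factor_B v))^2 + (norm (factor_A v))^2) / 2"
  proof -
    have "2 * (norm (factor_B v) * norm (factor_A v)) \<le> (norm (factor_B v))^2 + (norm (factor_A v))^2"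
      using sum_squares_bound[of "norm (factor_B v)" "norm (factor_A v)"] by (simp add: mult.assoc)
    moreover have gen: "\<And>x c::real. 2 * x \<le> c \<Longrightarrow> x \<le> c / 2" by simp
    ultimately show ?thesis by blast
  qed
  finally show ?thesis by (simp add: factor_norm)
qed


lemma fin_S:
  assumes "\<And>y. y \<in> set_pmf (S x) \<Longrightarrow> keeps_entries u (x::real^'n::finite) y"
  shows "finite (set_pmf (S x))"
proof -
  have "set_pmf (S x) \<subseteq> range (\<lambda>I. (\<chi> i. if i \<in> I then x$i else 0))"
  proof
    fix y assume "y \<in> set_pmf (S x)"
    then obtain I where "\<forall>i. y $ i = (if i \<in> I then x $ i else 0)"
      using assms unfolding keeps_entries_def by blast
    then have "y = (\<chi> i. if i \<in> I then x$i else 0)" by (simp add: vec_eq_iff)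
    then show "y \<in> range (\<lambda>I. (\<chi> i. if i \<in> I then x$i else 0))" by blast
  qed
  moreover have "finite (range (\<lambda>I::'n set. (\<chi> i. if i \<in> I then x$i else 0)))" by simp
  ultimately show ?thesis by (rule finite_subset)
qed

lemma fin_ef:
  assumes "\<And>x y. y \<in> set_pmf (S x) \<Longrightarrow> keeps_entries u (x::real^'n::finite) y"
  shows "finite (set_pmf (ef_memory S D n))"
proof (induction n)
  case 0 then show ?case by simp
next
  case (Suc n)
  have "\<And>x. finite (set_pmf (S x))" using fin_S assms by blast
  then show ?case using Suc by (simp add: set_bind_pmf)
qed

lemma exp_bind:
  fixes f :: "'b \<Rightarrow> real"
  assumes fp: "finite (set_pmf p)" and fN: "\<And>x. x \<in> set_pmf p \<Longrightarrow> finite (set_pmf (N x))"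
    and nn: "\<And>y. f y \<ge> 0"
  shows "measure_pmf.expectation (bind_pmf p N) f
       = measure_pmf.expectation p (\<lambda>x. measure_pmf.expectation (N x) f)"
proof -
  have fb: "finite (set_pmf (bind_pmf p N))" using fp fN by (simp add: set_bind_pmf)
  have "ennreal (measure_pmf.expectation (bind_pmf p N) f) = (\<integral>\<^sup>+y. ennreal (f y) \<partial>bind_pmf p N)"
    by (rule nn_integral_eq_integral[symmetric]) (auto intro!: integrable_measure_pmf_finite fb simp: nn)
  also have "\<dots> = (\<integral>\<^sup>+x. \<integral>\<^sup>+y. ennreal (f y) \<partial>N x \<partial>p)" by simp
  also have "\<dots> = (\<integral>\<^sup>+x. ennreal (measure_pmf.expectation (N x) f) \<partial>p)"
  proof (rule nn_integral_cong_AE)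
    show "AE x in measure_pmf p. (\<integral>\<^sup>+y. ennreal (f y) \<partial>N x) = ennreal (measure_pmf.expectation (N x) f)"
      unfolding AE_measure_pmf_iff
      by (auto intro!: nn_integral_eq_integral integrable_measure_pmf_finite fN simp: nn)
  qed
  also have "\<dots> = ennreal (measure_pmf.expectation p (\<lambda>x. measure_pmf.expectation (N x) f))"
    by (rule nn_integral_eq_integral) (use fp nn integrable_measure_pmf_finite in \<open>auto intro!: integral_nonneg_AE\<close>)
  finally show ?thesis
    by (subst (asm) ennreal_inj) (auto intro!: integral_nonneg_AE simp: nn)
qed

lemma young: "(norm ((a::'a::real_normed_vector) + b))^2 \<le> (1 + e) * (norm a)^2 + (1 + 1/e) * (norm b)^2"
  if "e > 0" for e :: real
proof -
  have "(norm (a + b))^2 \<le> (norm a + norm b)^2"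
    by (simp add: norm_triangle_ineq power_mono)
  also have "\<dots> = (norm a)^2 + 2 * norm a * norm b + (norm b)^2" by (simp add: power2_eq_square algebra_simps)
  also have "2 * norm a * norm b \<le> e * (norm a)^2 + (norm b)^2 / e"
  proof -
    have "0 \<le> (e * norm a - norm b)^2 / e" using that by simp
    also have "\<dots> = e * (norm a)^2 - 2 * norm a * norm b + (norm b)^2 / e"
      using that by (simp add: power2_eq_square field_simps)
    finally show ?thesis by simp
  qed
  finally show ?thesis by (simp add: algebra_simps)
qed



theorem corollary1:
  fixes S :: "real^('r::finite \<times> ('d::finite + 'l::finite)) \<Rightarrow> (real^('r \<times> ('d + 'l))) pmf"
    and DB :: "nat \<Rightarrow> real^'r^'d"
    and DA :: "nat \<Rightarrow> real^'l^'r"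
    and u :: nat and Ok :: real and t :: nat
  assumes u_pos: "0 < u"
    and u_lt: "u < CARD('r \<times> ('d + 'l))"
    and O_def: "Ok = real u / real CARD('r \<times> ('d + 'l))"
    and S_sparse: "\<And>x y. y \<in> set_pmf (S x) \<Longrightarrow> keeps_entries u x y"
    and S_contr: "\<And>x. measure_pmf.expectation (S x) (\<lambda>y. (norm (y - x))\<^sup>2)
                    \<le> (1 - real u / real CARD('r \<times> ('d + 'l))) * (norm x)\<^sup>2"
  shows "measure_pmf.expectation
           (ef_memory S (\<lambda>i. concat_lora (DB i) (DA i)) (Suc t))
           (\<lambda>m. norm (factor_B m ** factor_A m))
         \<le> 2 * (1 - Ok) / Ok\<^sup>2 *
           Max ((\<lambda>i. (norm (concat_lora (DB i) (DA i)))\<^sup>2) ` {0..t})"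
  proof -
  define q where "q = CARD('r \<times> ('d + 'l))"
  define \<delta> where "\<delta> = real u / real q"
  have q_pos0: "q > 0" using u_lt q_def by linarith
  then have q_pos: "real q > 0" by simp
  have dpos: "\<delta> > 0" using u_pos q_pos by (simp add: \<delta>_def)
  have uq: "real u < real q" unfolding q_def using u_lt by (simp only: of_nat_less_iff)
  have dlt: "\<delta> < 1" using uq q_pos by (simp add: \<delta>_def)
  have Ok: "Ok = \<delta>" unfolding \<delta>_def q_def by (rule O_def)
  define D where "D = (\<lambda>i. concat_lora (DB i) (DA i))"
  define M where "M = Max ((\<lambda>i. (norm (concat_lora (DB i) (DA i)))\<^sup>2) ` {0..t})"
  have DM: "(norm (D i))^2 \<le> M" if "i \<le> t" for i
    unfolding M_def D_def by (rule Max_ge) (use that in auto)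
  have M0: "M \<ge> 0" using DM[of 0] zero_le_power2[of "norm (D 0)"] by linarith
  define E where "E = (\<lambda>n. measure_pmf.expectation (ef_memory S D n) (\<lambda>m. (norm m)^2))"
  have finS: "\<And>x. finite (set_pmf (S x))" by (rule fin_S[OF S_sparse])
  have finE: "\<And>n. finite (set_pmf (ef_memory S D n))" by (rule fin_ef[OF S_sparse])
  have contr: "measure_pmf.expectation (S x) (\<lambda>y. (norm (y - x))\<^sup>2) \<le> (1 - \<delta>) * (norm x)^2" for x
    using S_contr[of x] unfolding \<delta>_def q_def .
  have step: "E (Suc n) \<le> (1 - \<delta>) * (1 + e) * E n + (1 - \<delta>) * (1 + 1/e) * (norm (D n))^2"
    if "e > 0" for n e
  proof -
    let ?p = "ef_memory S D n"
    have "E (Suc n) = measure_pmf.expectation ?p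
        (\<lambda>m. measure_pmf.expectation (map_pmf (\<lambda>s. m + D n - s) (S (m + D n))) (\<lambda>m. (norm m)^2))"
      unfolding E_def by (simp only: ef_memory.simps, rule exp_bind) (auto simp: finE finS)
    also have "\<dots> \<le> measure_pmf.expectation ?p
        (\<lambda>m. (1 - \<delta>) * (1 + e) * (norm m)^2 + (1 - \<delta>) * (1 + 1/e) * (norm (D n))^2)"
    proof (rule integral_mono)
      show "integrable (measure_pmf ?p) (\<lambda>m. measure_pmf.expectation (map_pmf (\<lambda>s. m + D n - s) (S (m + D n))) (\<lambda>m. (norm m)^2))"
        by (rule integrable_measure_pmf_finite[OF finE])
      show "integrable (measure_pmf ?p) (\<lambda>m. (1 - \<delta>) * (1 + e) * (norm m)^2 + (1 - \<delta>) * (1 + 1/e) * (norm (D n))^2)"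
        by (rule integrable_measure_pmf_finite[OF finE])
      fix m
      have "measure_pmf.expectation (map_pmf (\<lambda>s. m + D n - s) (S (m + D n))) (\<lambda>m. (norm m)^2)
          = measure_pmf.expectation (S (m + D n)) (\<lambda>y. (norm (y - (m + D n)))^2)"
        by (simp add: norm_minus_commute)
      also have "\<dots> \<le> (1 - \<delta>) * (norm (m + D n))^2" by (rule contr)
      also have "\<dots> \<le> (1 - \<delta>) * ((1 + e) * (norm m)^2 + (1 + 1/e) * (norm (D n))^2)"
        using dlt young[OF that, of m "D n"] by (intro mult_left_mono) auto
      finally show "measure_pmf.expectation (map_pmf (\<lambda>s. m + D n - s) (S (m + D n))) (\<lambda>m. (norm m)^2)
          \<le> (1 - \<delta>) * (1 + e) * (norm m)^2 + (1 - \<delta>) * (1 + 1/e) * (norm (D n))^2"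
        by (simp add: algebra_simps)
    qed
    also have "\<dots> = (1 - \<delta>) * (1 + e) * E n + (1 - \<delta>) * (1 + 1/e) * (norm (D n))^2"
      unfolding E_def
      by (subst Bochner_Integration.integral_add) (auto intro!: integrable_measure_pmf_finite finE)
    finally show ?thesis .
  qed
  define K where "K = (1 - \<delta>) * (2 - \<delta>) * (M / \<delta>^2)"
  define Bc where "Bc = 2 * K"
  have dK: "\<delta> * K = (1 - \<delta>) * (2 - \<delta>) / \<delta> * M"
  proof -
    have a: "\<delta> * (M / \<delta>^2) = M / \<delta>" using dpos by (simp add: power2_eq_square)
    have "\<delta> * K = ((1 - \<delta>) * (2 - \<delta>)) * (\<delta> * (M / \<delta>^2))"
      unfolding K_def by (rule mult.left_commute)
    also have "\<dots> = ((1 - \<delta>) * (2 - \<delta>)) * (M / \<delta>)" by (simp only: a)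
    also have "\<dots> = (1 - \<delta>) * (2 - \<delta>) / \<delta> * M" by simp
    finally show ?thesis .
  qed
  have bound: "E n \<le> Bc" if "n \<le> Suc t" for n
    using that
  proof (induction n)
    case 0
    have "Bc \<ge> 0" unfolding Bc_def K_def using dlt M0 by simp
    then show ?case by (simp add: E_def)
  next
    case (Suc n)
    define e where "e = \<delta> / (2 * (1 - \<delta>))"
    have epos: "e > 0" using dpos dlt by (simp add: e_def)
    have c1: "(1 - \<delta>) * (1 + e) = 1 - \<delta>/2" using dlt by (simp add: e_def field_simps)
    have c2: "(1 - \<delta>) * (1 + 1/e) = (1 - \<delta>) * (2 - \<delta>) / \<delta>" using dlt dpos by (simp add: e_def field_simps)
    have "E (Suc n) \<le> (1 - \<delta>/2) * E n + (1 - \<delta>) * (2 - \<delta>) / \<delta> * (norm (D n))^2"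
      using step[OF epos, of n] c1 c2 by simp
    also have "\<dots> \<le> (1 - \<delta>/2) * Bc + (1 - \<delta>) * (2 - \<delta>) / \<delta> * M"
      using Suc dlt dpos DM[of n] by (intro add_mono mult_left_mono) auto
    also have "\<dots> = Bc"
    proof -
      have "(1 - \<delta>/2) * Bc = 2 * K - \<delta> * K" unfolding Bc_def by (simp add: left_diff_distrib)
      then show ?thesis using dK unfolding Bc_def by linarith
    qed
    finally show ?case .
  qed
  have "measure_pmf.expectation (ef_memory S D (Suc t)) (\<lambda>m. norm (factor_B m ** factor_A m))
      \<le> measure_pmf.expectation (ef_memory S D (Suc t)) (\<lambda>m. (norm m)^2 / 2)"
    by (rule integral_mono[OF integrable_measure_pmf_finite[OF finE] integrable_measure_pmf_finite[OF finE] frob2])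
  also have "\<dots> = E (Suc t) / 2" unfolding E_def by simp
  also have "\<dots> \<le> Bc / 2" using bound[of "Suc t"] by simp
  also have "\<dots> \<le> 2 * (1 - \<delta>) / \<delta>^2 * M"
  proof -
    have "Bc / 2 = ((1 - \<delta>) * (2 - \<delta>)) * (M / \<delta>^2)" unfolding Bc_def K_def by simp
    also have "\<dots> \<le> (2 * (1 - \<delta>)) * (M / \<delta>^2)"
    proof (rule mult_right_mono)
      have "(1 - \<delta>) * (2 - \<delta>) \<le> (1 - \<delta>) * 2" by (rule mult_left_mono) (use dlt dpos in auto)
      then show "(1 - \<delta>) * (2 - \<delta>) \<le> 2 * (1 - \<delta>)" by simp
      show "0 \<le> M / \<delta>^2" using M0 by simp
    qed
    finally show ?thesis by simp
  qed
  finally show ?thesis unfolding D_def M_def Ok by simp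
qed

end
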